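(* Let $\Sigma=\{\mathtt{a},\mathtt{b},\mathtt{c}\}$. Define $F_0=\mathtt{a}$, $F_1=\mathtt{ab}$, and $F_i=F_{i-1}\cdot F_{i-2}$ for $i\ge 2$. Then the language $L_{\mathsf{fib}}=\{\mathtt{c}F_0\mathtt{c}F_1\mathtt{c}\cdots\mathtt{c}F_n\mathtt{c} : n\in\mathbb{N}\}$ belongs to $\mathcal{L}(\mathsf{FC})$.
   Context: For $w \in \Sigma^*$, $\mathsf{Facs}(w)$ is the set of all factors of $w$. The structure $\mathfrak{A}_w$ representing $w$ has universe $\mathsf{Facs}(w)\cup\{\perp\}$, a ternary relation $R_\circ=\{(x,y,z)\in\mathsf{Facs}(w)^3 : x=y\cdot z\}$, for each letter a constant interpreted as that letter if it occurs in $w$ and as $\perp$ otherwise, and a constant $\varepsilon$ interpreted as the empty word. $\mathsf{FC}$ is first-order logic over such structures, with atomic formulas $(x \mathbin{\dot=} y\cdot z)$ (meaning $R_\circ(x,y,z)$) where $x,y,z$ are variables, letters of $\Sigma$, or $\varepsilon$, closed under $\land,\lor,\neg,\exists,\forall$; quantified variables range over $\mathsf{Facs}(w)$. For a sentence $\varphi$, $\mathcal{L}(\varphi)=\{w\in\Sigma^*:\mathfrak{A}_w\models\varphi\}$, and $\mathcal{L}(\mathsf{FC})$ is the class of all such languages. *)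

theory Defs
  imports Main "HOL-Library.Sublist"
begin

datatype sym = a | b | c

datatype fc_term = FVar nat | FLet sym | FEps

datatype fc =
    FCat fc_term fc_term fc_term
  | FNot fc
  | FAnd fc fc
  | FOr fc fc
  | FEx nat fc
  | FAll nat fc

fun fv_term :: "fc_term \<Rightarrow> nat set" where
  "fv_term (FVar x) = {x}"
| "fv_term (FLet _) = {}"
| "fv_term FEps = {}"

fun fv :: "fc \<Rightarrow> nat set" where
  "fv (FCat x y z) = fv_term x \<union> fv_term y \<union> fv_term z"
| "fv (FNot \<phi>) = fv \<phi>"
| "fv (FAnd \<phi> \<psi>) = fv \<phi> \<union> fv \<psi>"
| "fv (FOr \<phi> \<psi>) = fv \<phi> \<union> fv \<psi>"
| "fv (FEx x \<phi>) = fv \<phi> - {x}"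
| "fv (FAll x \<phi>) = fv \<phi> - {x}"

definition Facs :: "sym list \<Rightarrow> sym list set" where
  "Facs w = {u. sublist u w}"

text \<open>Elements of the universe of A_w: factors of w ("Some u") or bottom ("None").
  A letter constant denotes that letter if it occurs in w, otherwise bottom.\<close>
fun eval_term :: "sym list \<Rightarrow> (nat \<Rightarrow> sym list option) \<Rightarrow> fc_term \<Rightarrow> sym list option" where
  "eval_term w \<sigma> (FVar x) = \<sigma> x"
| "eval_term w \<sigma> (FLet s) = (if s \<in> set w then Some [s] else None)"
| "eval_term w \<sigma> FEps = Some []"

fun sat :: "sym list \<Rightarrow> (nat \<Rightarrow> sym list option) \<Rightarrow> fc \<Rightarrow> bool" where
  "sat w \<sigma> (FCat x y z) =
     (\<exists>u v t. eval_term w \<sigma> x = Some u \<and> eval_term w \<sigma> y = Some v \<and> eval_term w \<sigma> z = Some t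
        \<and> u \<in> Facs w \<and> v \<in> Facs w \<and> t \<in> Facs w \<and> u = v @ t)"
| "sat w \<sigma> (FNot \<phi>) = (\<not> sat w \<sigma> \<phi>)"
| "sat w \<sigma> (FAnd \<phi> \<psi>) = (sat w \<sigma> \<phi> \<and> sat w \<sigma> \<psi>)"
| "sat w \<sigma> (FOr \<phi> \<psi>) = (sat w \<sigma> \<phi> \<or> sat w \<sigma> \<psi>)"
| "sat w \<sigma> (FEx x \<phi>) = (\<exists>u \<in> Facs w. sat w (\<sigma>(x := Some u)) \<phi>)"
| "sat w \<sigma> (FAll x \<phi>) = (\<forall>u \<in> Facs w. sat w (\<sigma>(x := Some u)) \<phi>)"

definition sentence :: "fc \<Rightarrow> bool" where
  "sentence \<phi> \<longleftrightarrow> fv \<phi> = {}"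

text \<open>L(phi) for a sentence phi (the assignment is irrelevant for sentences).\<close>
definition fc_lang :: "fc \<Rightarrow> sym list set" where
  "fc_lang \<phi> = {w. sat w (\<lambda>_. None) \<phi>}"

definition FC_languages :: "sym list set set" where
  "FC_languages = {fc_lang \<phi> | \<phi>. sentence \<phi>}"

fun fibw :: "nat \<Rightarrow> sym list" where
  "fibw 0 = [a]"
| "fibw (Suc 0) = [a, b]"
| "fibw (Suc (Suc n)) = fibw (Suc n) @ fibw n"

definition L_fib :: "sym list set" where
  "L_fib = {concat (map (\<lambda>i. c # fibw i) [0..<Suc n]) @ [c] | n. True}"

end

theory Submission
  imports Defs
begin

fun G :: "nat \<Rightarrow> sym list" where
  "G 0 = [c, a, c]"
| "G (Suc k) = G k @ fibw (Suc k) @ [c]"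

lemma fib_nc: "c \<notin> set (fibw n)"
  by (induction n rule: fibw.induct) auto

lemma fib_ne: "fibw n \<noteq> []"
  by (induction n rule: fibw.induct) auto

lemma G_concat: "G n = concat (map (\<lambda>i. c # fibw i) [0..<Suc n]) @ [c]"
  by (induction n) auto

lemma L_fib_G: "L_fib = range G"
  unfolding L_fib_def by (auto simp: G_concat)

lemma G_len: "length (G k) > k"
proof (induction k)
  case (Suc k)
  have "0 < length (fibw (Suc k))" using fib_ne by blast
  with Suc show ?case by simp
qed simp

lemma G_end0: "\<exists>Q. G k = Q @ c # fibw k @ [c]"
proof (induction k)
  case 0 then show ?case by (intro exI[of _ "[]"]) simp
next
  case (Suc k)
  then obtain Q where "G k = Q @ c # fibw k @ [c]" by blast
  then show ?case by (intro exI[of _ "Q @ c # fibw k"]) simp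
qed

lemma G_end1: "\<exists>Q. G (Suc k) = Q @ c # fibw k @ c # fibw (Suc k) @ [c]"
proof -
  obtain Q where "G k = Q @ c # fibw k @ [c]" using G_end0 by blast
  then show ?thesis by (intro exI[of _ Q]) simp
qed

lemma split_c:
  assumes "c \<notin> set u" "c \<notin> set v" "A @ c # u = B @ c # v"
  shows "A = B \<and> u = v"
proof -
  have e: "rev u @ c # rev A = rev v @ c # rev B" using assms(3)
    by (metis append.assoc append_Cons append_Nil rev.simps(2) rev_append)
  have "takeWhile (\<lambda>x. x \<noteq> c) (rev u @ c # rev A) = rev u"
    using assms(1) by (subst takeWhile_append2) auto
  moreover have "takeWhile (\<lambda>x. x \<noteq> c) (rev v @ c # rev B) = rev v"
    using assms(2) by (subst takeWhile_append2) auto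
  ultimately have uv: "u = v" using e by simp
  then show ?thesis using assms(3) by simp
qed

definition cond :: "sym list \<Rightarrow> bool" where
  "cond w \<longleftrightarrow> (w = [c,a,c] \<or> prefix [c,a,c,a,b,c] w) \<and> (\<exists>u. w = u @ [c]) \<and>
     (\<forall>x y z. sublist (c#x@c#y@c#z@[c]) w \<and> c \<notin> set x \<and> c \<notin> set y \<and> c \<notin> set z \<longrightarrow> z = y @ x)"

lemma last_c_block:
  assumes "c \<notin> set f" "f @ [c] = p @ c # r" shows "r = []"
proof (rule ccontr)
  assume "r \<noteq> []"
  have "last (p @ c # r) = last r" using \<open>r \<noteq> []\<close> by simp
  then have "last r = c" using assms(2) by (metis last_snoc)
  then obtain r' where "r = r' @ [c]" using \<open>r \<noteq> []\<close> by (metis append_butlast_last_id)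
  then have "f = p @ c # r'" using assms(2) by simp
  then show False using assms(1) by simp
qed

lemma G_cond3:
  "sublist (c#x@c#y@c#z@[c]) (G n) \<Longrightarrow> c \<notin> set x \<Longrightarrow> c \<notin> set y \<Longrightarrow> c \<notin> set z \<Longrightarrow> z = y @ x"
proof (induction n arbitrary: x y z)
  case 0
  then have "length (c#x@c#y@c#z@[c]) \<le> 3" using sublist_length_le by fastforce
  then show ?case by simp
next
  case (Suc n)
  let ?s = "c#x@c#y@c#z@[c]"
  let ?f = "fibw (Suc n)"
  have "sublist ?s (G n @ (?f @ [c]))" using Suc.prems(1) by simp
  then consider "sublist ?s (G n)" | "sublist ?s (?f @ [c])"
    | (m) s1 s2 where "?s = s1 @ s2" "suffix s1 (G n)" "prefix s2 (?f @ [c])"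
    unfolding sublist_append by blast
  then show ?case
  proof cases
    case 1 then show ?thesis using Suc by blast
  next
    case 2
    then obtain p q where "?f @ [c] = p @ ?s @ q" by (auto simp: sublist_def)
    then have "?f @ [c] = (p @ c#x@c#y@c#z) @ c # q" by simp
    then have "q = []" using last_c_block fib_nc by blast
    then have "?f = p @ c#x@c#y@c#z" using \<open>?f @ [c] = p @ ?s @ q\<close> by simp
    then show ?thesis using fib_nc[of "Suc n"] by simp
  next
    case m
    show ?thesis
    proof (cases "s2 = []")
      case True
      then have "sublist ?s (G n)" using m by auto
      then show ?thesis using Suc by blast
    next
      case False
      have "last s2 = c" using m False by (metis last_appendR last_snoc append.assoc append_Cons)
      obtain r where r: "?f @ [c] = s2 @ r" using m by (auto simp: prefix_def)
      have r0: "r = []"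
      proof -
        have "s2 = butlast s2 @ [c]" using False \<open>last s2 = c\<close> by (metis append_butlast_last_id)
        then have "?f @ [c] = butlast s2 @ c # r" using r by simp
        then show ?thesis using last_c_block fib_nc by blast
      qed
      then have s2: "s2 = ?f @ [c]" using r by simp
      have "s1 \<noteq> []"
      proof
        assume "s1 = []"
        then have "?s = ?f @ [c]" using m s2 by simp
        then have "hd (?f @ [c]) = c" by (metis list.sel(1))
        then show False using fib_ne fib_nc by (metis hd_append2 hd_in_set)
      qed
      obtain P where P: "G n = P @ s1" using m by (auto simp: suffix_def)
      have "last (G n) = c" by (cases n) auto
      then have "last s1 = c" using P \<open>s1 \<noteq> []\<close> by simp
      then obtain s1' where s1': "s1 = s1' @ [c]" using \<open>s1 \<noteq> []\<close> by (metis append_butlast_last_id)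
      have "(c#x@c#y) @ c # z = s1' @ c # ?f"
        using m(1) s2 s1' by simp
      then have zf: "z = ?f" and s1'': "s1' = c#x@c#y" using split_c Suc.prems(4) fib_nc by blast+
      show ?thesis
      proof (cases n)
        case 0
        then have "G n = P @ c#x@c#y@[c]" using P s1' s1'' by simp
        then have "[c,a] = P @ c#x@c#y" using 0 by simp
        then have False by (cases P) (auto simp: Cons_eq_append_conv)
        then show ?thesis ..
      next
        case (Suc m)
        obtain Q where "G (Suc m) = Q @ c # fibw m @ c # fibw (Suc m) @ [c]" using G_end1 by blast
        then have "(P @ c # x) @ c # y = (Q @ c # fibw m) @ c # fibw (Suc m)"
          using P s1' s1'' Suc by simp
        then have "P @ c # x = Q @ c # fibw m" "y = fibw (Suc m)"
          using split_c Suc.prems(3) fib_nc by blast+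
        moreover then have "x = fibw m" using split_c Suc.prems(2) fib_nc by blast
        ultimately show ?thesis using zf Suc by simp
      qed
    qed
  qed
qed

lemma G_cond: "cond (G n)"
proof -
  have "prefix (G 1) (G (Suc d))" for d
  proof (induction d)
    case (Suc d) then show ?case by (metis G.simps(2) prefix_prefix)
  qed simp
  then have "n = 0 \<or> prefix (G 1) (G n)" by (cases n) auto
  then have "G n = [c,a,c] \<or> prefix [c,a,c,a,b,c] (G n)" by auto
  moreover have "\<exists>u. G n = u @ [c]" by (cases n) auto
  ultimately show ?thesis unfolding cond_def using G_cond3 by blast
qed

lemma cond_G:
  assumes "cond w" shows "w \<in> range G"
proof (rule ccontr)
  assume nw: "w \<notin> range G"
  have A: "w = [c,a,c] \<or> prefix [c,a,c,a,b,c] w" and B: "\<exists>u. w = u @ [c]"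
    and C: "\<And>x y z. sublist (c#x@c#y@c#z@[c]) w \<Longrightarrow> c \<notin> set x \<Longrightarrow> c \<notin> set y \<Longrightarrow> c \<notin> set z \<Longrightarrow> z = y @ x"
    using assms unfolding cond_def by blast+
  have "prefix (G (Suc k)) w" for k
  proof (induction k)
    case 0
    have "w \<noteq> G 0" using nw by blast
    then show ?case using A by simp
  next
    case (Suc k)
    have "w \<noteq> G (Suc k)" using nw by blast
    then obtain r where r: "w = G (Suc k) @ r" "r \<noteq> []" using Suc by (auto simp: prefix_def)
    have "c \<in> set r" using B r by (metis append_assoc append_self_conv2 in_set_conv_decomp last_appendR last_snoc append_butlast_last_id last_in_set)
    then obtain z r' where zr: "r = z @ c # r'" "c \<notin> set z" by (metis split_list_first)
    obtain Q where Q: "G (Suc k) = Q @ c # fibw k @ c # fibw (Suc k) @ [c]" using G_end1 by blast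
    have "w = Q @ (c # fibw k @ c # fibw (Suc k) @ c # z @ [c]) @ r'" using r zr Q by simp
    then have "sublist (c # fibw k @ c # fibw (Suc k) @ c # z @ [c]) w" by (metis sublist_appendI)
    then have "z = fibw (Suc k) @ fibw k" using C fib_nc zr(2) by blast
    then have "w = G (Suc (Suc k)) @ r'" using r zr by simp
    then show ?case by (simp add: prefix_def)
  qed
  then have "prefix (G (Suc (length w))) w" by blast
  then have "length (G (Suc (length w))) \<le> length w" by (rule prefix_length_le)
  then show False using G_len[of "Suc (length w)"] by linarith
qed

lemma cond_iff: "cond w \<longleftrightarrow> w \<in> L_fib"
proof
  assume "cond w" then show "w \<in> L_fib" using cond_G L_fib_G by simp
next
  assume "w \<in> L_fib" then obtain n where "w = G n" using L_fib_G by auto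
  then show "cond w" using G_cond by simp
qed


definition imp :: "fc \<Rightarrow> fc \<Rightarrow> fc" where "imp p q = FOr (FNot p) q"

abbreviation V :: "nat \<Rightarrow> fc_term" where "V \<equiv> FVar"

lemma eval_let[simp]: "eval_term w \<sigma> (FLet s) = Some u \<longleftrightarrow> s \<in> set w \<and> u = [s]"
  by (auto simp: eval_term.simps)

declare eval_term.simps(2)[simp del]

lemma Facs_sing[simp]: "[s] \<in> Facs w \<longleftrightarrow> s \<in> set w"
  by (auto simp: Facs_def sublist_def in_set_conv_decomp)

lemma Facs_w[simp]: "w \<in> Facs w" by (simp add: Facs_def)

lemma Facs_trans: "sublist u v \<Longrightarrow> v \<in> Facs w \<Longrightarrow> u \<in> Facs w"
proof -
  assume "sublist u v" "v \<in> Facs w"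
  then obtain p1 s1 p2 s2 where "v = p1 @ u @ s1" "w = p2 @ v @ s2"
    by (auto simp: Facs_def sublist_def)
  then have "w = (p2 @ p1) @ u @ (s1 @ s2)" by simp
  then show "u \<in> Facs w" unfolding Facs_def sublist_def by blast
qed

lemma Facs_set: "u \<in> Facs w \<Longrightarrow> set u \<subseteq> set w"
  unfolding Facs_def using set_mono_sublist by blast

definition cfree :: "nat \<Rightarrow> fc" where
  "cfree v = FNot (FEx 11 (FEx 12 (FEx 13 (FAnd (FCat (V 13) (V 11) (FLet c)) (FCat (V v) (V 13) (V 12))))))"

lemma sat_cfree:
  assumes "\<sigma> v = Some x" "x \<in> Facs w" "v \<notin> {11,12,13}"
  shows "sat w \<sigma> (cfree v) \<longleftrightarrow> c \<notin> set x"
proof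
  assume H: "sat w \<sigma> (cfree v)"
  show "c \<notin> set x"
  proof
    assume "c \<in> set x"
    then obtain p q where x: "x = p @ c # q" by (metis split_list)
    have cw: "c \<in> set w" using \<open>c \<in> set x\<close> Facs_set assms(2) by blast
    have "sublist p x" "sublist q x" "sublist (p @ [c]) x" using x
      by (metis sublist_append_rightI append.assoc append_Cons append_Nil,
          metis sublist_append_leftI append.assoc append_Cons append_Nil,
          metis sublist_append_rightI append.assoc append_Cons append_Nil)
    then have "p \<in> Facs w" "q \<in> Facs w" "p @ [c] \<in> Facs w"
      using assms(2) by (auto intro: Facs_trans)
    then show False using H assms x cw by (auto simp: cfree_def)
  qed
next
  assume "c \<notin> set x"
  then show "sat w \<sigma> (cfree v)" using assms by (auto simp: cfree_def)
qed

definition isW :: fc where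
  "isW = FAll 1 (FEx 2 (FEx 3 (FEx 4 (FAnd (FCat (V 4) (V 2) (V 1)) (FCat (V 0) (V 4) (V 3))))))"

lemma sat_isW:
  assumes "\<sigma> 0 = Some W" "W \<in> Facs w"
  shows "sat w \<sigma> isW \<longleftrightarrow> W = w"
proof
  assume "sat w \<sigma> isW"
  then have "\<forall>u\<in>Facs w. \<exists>ua\<in>Facs w. ua @ u \<in> Facs w \<and> (\<exists>ub\<in>Facs w. W = ua @ u @ ub)"
    using assms by (simp add: isW_def)
  then obtain p q x where "p \<in> Facs w" "x = p @ w" "W = x @ q"
    using Facs_w by fastforce
  moreover have "sublist W w" using assms(2) by (simp add: Facs_def)
  ultimately show "W = w" using sublist_length_le by fastforce
next
  assume W: "W = w"
  have "\<forall>u\<in>Facs w. \<exists>ua\<in>Facs w. ua @ u \<in> Facs w \<and> (\<exists>ub\<in>Facs w. W = ua @ u @ ub)"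
  proof
    fix u assume "u \<in> Facs w"
    then obtain p q where pq: "w = p @ u @ q" by (auto simp: Facs_def sublist_def)
    have "sublist p w" "sublist q w" "sublist (p @ u) w" using pq
      by (metis sublist_append_rightI, metis sublist_append_leftI append.assoc,
          metis sublist_append_rightI append.assoc)
    then have "p \<in> Facs w" "q \<in> Facs w" "p @ u \<in> Facs w" by (auto simp: Facs_def)
    then show "\<exists>ua\<in>Facs w. ua @ u \<in> Facs w \<and> (\<exists>ub\<in>Facs w. W = ua @ u @ ub)"
      using pq W by blast
  qed
  then show "sat w \<sigma> isW" using assms by (simp add: isW_def)
qed

definition phiA :: fc where
  "phiA = FOr (FEx 5 (FAnd (FCat (V 5) (FLet c) (FLet a)) (FCat (V 0) (V 5) (FLet c))))
     (FEx 5 (FEx 6 (FEx 7 (FEx 8 (FEx 9 (FEx 10 (FAnd (FCat (V 5) (FLet c) (FLet a))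
       (FAnd (FCat (V 6) (V 5) (FLet c)) (FAnd (FCat (V 7) (V 6) (FLet a))
       (FAnd (FCat (V 8) (V 7) (FLet b)) (FAnd (FCat (V 9) (V 8) (FLet c)) (FCat (V 0) (V 9) (V 10)))))))))))))"

lemma sat_A:
  assumes "\<sigma> 0 = Some w"
  shows "sat w \<sigma> phiA \<longleftrightarrow> (w = [c,a,c] \<or> prefix [c,a,c,a,b,c] w)"
proof
  assume "sat w \<sigma> phiA"
  then show "w = [c,a,c] \<or> prefix [c,a,c,a,b,c] w"
    using assms by (auto simp: phiA_def prefix_def)
next
  assume "w = [c,a,c] \<or> prefix [c,a,c,a,b,c] w"
  then show "sat w \<sigma> phiA"
  proof
    assume w: "w = [c,a,c]"
    have "sublist [c,a] ([c,a] @ [c])" by (rule sublist_append_rightI)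
    then have "[c,a] \<in> Facs w" using w by (simp add: Facs_def)
    then show ?thesis unfolding phiA_def using assms w
      by simp
  next
    assume "prefix [c,a,c,a,b,c] w"
    then obtain r where w: "w = [c,a,c,a,b,c] @ r" by (auto simp: prefix_def)
    have F: "[c,a] \<in> Facs w" "[c,a,c] \<in> Facs w" "[c,a,c,a] \<in> Facs w" "[c,a,c,a,b] \<in> Facs w"
      "[c,a,c,a,b,c] \<in> Facs w" "r \<in> Facs w"
    proof -
      have "prefix [c,a] w" "prefix [c,a,c] w" "prefix [c,a,c,a] w" "prefix [c,a,c,a,b] w"
        "prefix [c,a,c,a,b,c] w" "suffix r w" using w by (simp_all add: suffixI)
      then show "[c,a] \<in> Facs w" "[c,a,c] \<in> Facs w" "[c,a,c,a] \<in> Facs w" "[c,a,c,a,b] \<in> Facs w"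
      "[c,a,c,a,b,c] \<in> Facs w" "r \<in> Facs w" by (auto simp: Facs_def)
    qed
    show ?thesis unfolding phiA_def
      using assms w F
      by simp
  qed
qed

definition phiB :: fc where "phiB = FEx 5 (FCat (V 0) (V 5) (FLet c))"

lemma sat_B:
  assumes "\<sigma> 0 = Some w"
  shows "sat w \<sigma> phiB \<longleftrightarrow> (\<exists>u. w = u @ [c])"
proof
  assume "sat w \<sigma> phiB"
  then show "\<exists>u. w = u @ [c]" using assms by (auto simp: phiB_def)
next
  assume "\<exists>u. w = u @ [c]"
  then obtain u where w: "w = u @ [c]" by blast
  have "u \<in> Facs w" using w by (auto simp: Facs_def)
  then show "sat w \<sigma> phiB" using assms w by (auto simp: phiB_def)
qed

definition phiC :: fc where
  "phiC = FAll 1 (FAll 2 (FAll 3 (FAll 4 (FAll 5 (FAll 6 (FAll 7 (FAll 8 (FAll 9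
    (imp (FAnd (FCat (V 4) (FLet c) (V 1)) (FAnd (FCat (V 5) (V 4) (FLet c))
      (FAnd (FCat (V 6) (V 5) (V 2)) (FAnd (FCat (V 7) (V 6) (FLet c))
      (FAnd (FCat (V 8) (V 7) (V 3)) (FAnd (FCat (V 9) (V 8) (FLet c))
      (FAnd (cfree 1) (FAnd (cfree 2) (cfree 3)))))))))
     (FCat (V 3) (V 2) (V 1)))))))))))"

lemma sat_C1:
  assumes "\<sigma> 0 = Some w"
  shows "sat w \<sigma> phiC \<longleftrightarrow> (\<forall>x\<in>Facs w. \<forall>y\<in>Facs w. \<forall>z\<in>Facs w. \<forall>q4\<in>Facs w. \<forall>q5\<in>Facs w.
    \<forall>q6\<in>Facs w. \<forall>q7\<in>Facs w. \<forall>q8\<in>Facs w. \<forall>q9\<in>Facs w.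
    (c \<in> set w \<and> q4 = c#x \<and> q5 = q4@[c] \<and> q6 = q5@y \<and> q7 = q6@[c] \<and> q8 = q7@z \<and> q9 = q8@[c]
     \<and> c \<notin> set x \<and> c \<notin> set y \<and> c \<notin> set z) \<longrightarrow> z = y @ x)"
  unfolding phiC_def imp_def using assms
  by (simp add: sat_cfree) (auto simp: Facs_def)

lemma subF: "sublist u s \<Longrightarrow> sublist s w \<Longrightarrow> u \<in> Facs w"
  using Facs_trans by (auto simp: Facs_def)

lemma sat_C:
  assumes "\<sigma> 0 = Some w"
  shows "sat w \<sigma> phiC \<longleftrightarrow> (\<forall>x y z. sublist (c#x@c#y@c#z@[c]) w \<and> c \<notin> set x \<and> c \<notin> set y \<and> c \<notin> set z \<longrightarrow> z = y @ x)"
  unfolding sat_C1[of \<sigma> w, OF assms]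
proof (intro iffI allI impI ballI, elim conjE)
  fix x y z
  assume H: "\<forall>x\<in>Facs w. \<forall>y\<in>Facs w. \<forall>z\<in>Facs w. \<forall>q4\<in>Facs w. \<forall>q5\<in>Facs w.
    \<forall>q6\<in>Facs w. \<forall>q7\<in>Facs w. \<forall>q8\<in>Facs w. \<forall>q9\<in>Facs w.
    (c \<in> set w \<and> q4 = c#x \<and> q5 = q4@[c] \<and> q6 = q5@y \<and> q7 = q6@[c] \<and> q8 = q7@z \<and> q9 = q8@[c]
     \<and> c \<notin> set x \<and> c \<notin> set y \<and> c \<notin> set z) \<longrightarrow> z = y @ x"
    and s: "sublist (c#x@c#y@c#z@[c]) w" and nx: "c \<notin> set x" and ny: "c \<notin> set y" and nz: "c \<notin> set z"
  let ?s = "c#x@c#y@c#z@[c]"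
  have cw: "c \<in> set w" using s set_mono_sublist by fastforce
  have "sublist x ([c] @ x @ (c#y@c#z@[c]))" by (rule sublist_appendI)
  then have "sublist x ?s" by simp
  moreover have "sublist y ((c#x@[c]) @ y @ (c#z@[c]))" by (rule sublist_appendI)
  then have "sublist y ?s" by simp
  moreover have "sublist z ((c#x@c#y@[c]) @ z @ [c])" by (rule sublist_appendI)
  then have "sublist z ?s" by simp
  moreover have "prefix (c#x) ?s" by simp
  moreover have "prefix ((c#x)@[c]) ?s" by simp
  moreover have "prefix (((c#x)@[c])@y) ?s" by simp
  moreover have "prefix ((((c#x)@[c])@y)@[c]) ?s" by simp
  moreover have "prefix (((((c#x)@[c])@y)@[c])@z) ?s" by simp
  ultimately have F0: "x \<in> Facs w" "y \<in> Facs w" "z \<in> Facs w" "c#x \<in> Facs w" "(c#x)@[c] \<in> Facs w"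
     "((c#x)@[c])@y \<in> Facs w" "(((c#x)@[c])@y)@[c] \<in> Facs w" "((((c#x)@[c])@y)@[c])@z \<in> Facs w"
    using subF[OF _ s] prefix_imp_sublist by metis+
  have "(((((c#x)@[c])@y)@[c])@z)@[c] \<in> Facs w" using s by (simp add: Facs_def)
  note F = F0 this
  show "z = y @ x"
    using H[rule_format, OF F] cw nx ny nz by simp
next
  fix x y z q4 q5 q6 q7 q8 q9
  assume H: "\<forall>x y z. sublist (c#x@c#y@c#z@[c]) w \<and> c \<notin> set x \<and> c \<notin> set y \<and> c \<notin> set z \<longrightarrow> z = y @ x"
    and q9: "q9 \<in> Facs w"
    and P: "c \<in> set w \<and> q4 = c#x \<and> q5 = q4@[c] \<and> q6 = q5@y \<and> q7 = q6@[c] \<and> q8 = q7@z \<and> q9 = q8@[c]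
     \<and> c \<notin> set x \<and> c \<notin> set y \<and> c \<notin> set z"
  have "q9 = c#x@c#y@c#z@[c]" using P by simp
  then have "sublist (c#x@c#y@c#z@[c]) w" using q9 by (simp add: Facs_def)
  then show "z = y @ x" using H P by blast
qed

definition phi :: fc where "phi = FEx 0 (FAnd isW (FAnd phiA (FAnd phiB phiC)))"

lemma sat_phi: "sat w (\<lambda>_. None) phi \<longleftrightarrow> cond w"
proof -
  have "sat w (\<lambda>_. None) phi \<longleftrightarrow> (\<exists>W\<in>Facs w. sat w ((\<lambda>_. None)(0 := Some W)) isW \<and>
     sat w ((\<lambda>_. None)(0 := Some W)) phiA \<and> sat w ((\<lambda>_. None)(0 := Some W)) phiB \<and>
     sat w ((\<lambda>_. None)(0 := Some W)) phiC)"
    by (simp add: phi_def)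
  also have "\<dots> \<longleftrightarrow> sat w ((\<lambda>_. None)(0 := Some w)) phiA \<and> sat w ((\<lambda>_. None)(0 := Some w)) phiB \<and>
     sat w ((\<lambda>_. None)(0 := Some w)) phiC"
    using sat_isW by (metis Facs_w fun_upd_same)
  also have "\<dots> \<longleftrightarrow> cond w"
    by (simp add: sat_A sat_B sat_C cond_def)
  finally show ?thesis .
qed

lemma sentence_phi: "sentence phi"
  by (simp add: sentence_def phi_def isW_def phiA_def phiB_def phiC_def imp_def cfree_def) auto

theorem proposition4p1:
  shows "L_fib \<in> FC_languages"
proof -
  have "fc_lang phi = L_fib"
    unfolding fc_lang_def using sat_phi cond_iff by blast
  then show ?thesis unfolding FC_languages_def using sentence_phi by blast
qed

end
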